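(* Let $P$ be any protocol achieving sender anonymity among $n$ players in which the only resources available to the players are pairwise shared secret key bits, a reliable broadcast channel and public (classical) communication. If a set $T$ of $t$ players is such that deleting the corresponding $t$ nodes from the key-sharing graph $G=(V,E)$ disconnects it (i.e. leaves at least two nonempty parts with no edge between them), then a collusion of these $t$ players can break the sender's anonymity.
   Context: The key-sharing graph of the protocol is the undirected graph $G=(V,E)$ whose nodes are the players, with an edge between nodes $i$ and $j$ iff $i$ and $j$ share one bit of secret key $r_{i,j}$. Sender anonymity: for an adversary corrupting a set of $t\le n-2$ players not including the sender $s$ and observing all communication $C$ and the randomness $G^t$ of the corrupted players, $\max_S\Pr[S=s\mid G^t,C]=\max_S\Pr[S=s]=1/(n-t)$, the maximum over random variables $S$ depending only on $C$ and $G^t$. The adversary is computationally unbounded and monitors all physical transmissions. *)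

theory Defs
  imports "HOL-Probability.Probability"
begin

text \<open>
  Undirected edges are 2-element sets of players.  A key assignment kappa gives the
  shared bit of every edge in E (and is False outside E).  Keys are uniform.
\<close>

definition key_graph :: "nat \<Rightarrow> nat set set \<Rightarrow> bool" where
  "key_graph n E \<longleftrightarrow> (\<forall>e\<in>E. \<exists>i j. e = {i, j} \<and> i \<noteq> j \<and> i < n \<and> j < n)"

definition key_assignments :: "nat set set \<Rightarrow> (nat set \<Rightarrow> bool) set" where
  "key_assignments E = {\<kappa>. \<forall>e. e \<notin> E \<longrightarrow> \<kappa> e = False}"

definition key_view :: "nat set set \<Rightarrow> (nat set \<Rightarrow> bool) \<Rightarrow> nat \<Rightarrow> (nat set \<Rightarrow> bool)" where
  "key_view E \<kappa> i = (\<lambda>e. if e \<in> E \<and> i \<in> e then \<kappa> e else False)"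

definition coalition_view :: "nat set set \<Rightarrow> nat set \<Rightarrow> (nat set \<Rightarrow> bool) \<Rightarrow> (nat set \<Rightarrow> bool)" where
  "coalition_view E T \<kappa> = (\<lambda>e. if e \<in> E \<and> e \<inter> T \<noteq> {} then \<kappa> e else False)"

text \<open>
  A protocol is a next-message function P: in round k, player i broadcasts
  P k i input keys history, where input is Some m for the sender (message m)
  and None otherwise, keys is the player's key view, and history is the public
  transcript so far (one list of n broadcast symbols per round).
  transcript P n E s m kappa R is the public communication C after R rounds.
\<close>
fun transcript ::
  "(nat \<Rightarrow> nat \<Rightarrow> 'm option \<Rightarrow> (nat set \<Rightarrow> bool) \<Rightarrow> 'c list list \<Rightarrow> 'c)
   \<Rightarrow> nat \<Rightarrow> nat set set \<Rightarrow> nat \<Rightarrow> 'm \<Rightarrow> (nat set \<Rightarrow> bool) \<Rightarrow> nat \<Rightarrow> 'c list list" where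
  "transcript P n E s m \<kappa> 0 = []"
| "transcript P n E s m \<kappa> (Suc k) =
     (let h = transcript P n E s m \<kappa> k
      in h @ [map (\<lambda>i. P k i (if i = s then Some m else None) (key_view E \<kappa> i) h) [0..<n]])"

definition transmits :: "(nat \<Rightarrow> nat \<Rightarrow> 'm option \<Rightarrow> (nat set \<Rightarrow> bool) \<Rightarrow> 'c list list \<Rightarrow> 'c)
   \<Rightarrow> nat \<Rightarrow> nat \<Rightarrow> nat set set \<Rightarrow> 'm set \<Rightarrow> bool" where
  "transmits P R n E M \<longleftrightarrow>
     (\<exists>dec. \<forall>s<n. \<forall>m\<in>M. \<forall>\<kappa>\<in>key_assignments E. dec (transcript P n E s m \<kappa> R) = m)"

definition adv_experiment ::
  "(nat \<Rightarrow> nat \<Rightarrow> 'm option \<Rightarrow> (nat set \<Rightarrow> bool) \<Rightarrow> 'c list list \<Rightarrow> 'c)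
   \<Rightarrow> nat \<Rightarrow> nat \<Rightarrow> nat set set \<Rightarrow> nat set \<Rightarrow> 'm
   \<Rightarrow> (nat \<times> 'c list list \<times> (nat set \<Rightarrow> bool)) pmf" where
  "adv_experiment P R n E T m =
     do { s \<leftarrow> pmf_of_set ({0..<n} - T);
          \<kappa> \<leftarrow> pmf_of_set (key_assignments E);
          return_pmf (s, transcript P n E s m \<kappa> R, coalition_view E T \<kappa>) }"

definition guess_prob ::
  "(nat \<Rightarrow> nat \<Rightarrow> 'm option \<Rightarrow> (nat set \<Rightarrow> bool) \<Rightarrow> 'c list list \<Rightarrow> 'c)
   \<Rightarrow> nat \<Rightarrow> nat \<Rightarrow> nat set set \<Rightarrow> nat set \<Rightarrow> 'm
   \<Rightarrow> ('c list list \<Rightarrow> (nat set \<Rightarrow> bool) \<Rightarrow> nat) \<Rightarrow> real" where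
  "guess_prob P R n E T m S =
     measure_pmf.prob (adv_experiment P R n E T m) {(s, C, g). S C g = s}"

text \<open>Sender anonymity against the coalition T:
  max_S Pr[S = s | G^t, C] = 1/(n - t), for every message.\<close>
definition sender_anonymous ::
  "(nat \<Rightarrow> nat \<Rightarrow> 'm option \<Rightarrow> (nat set \<Rightarrow> bool) \<Rightarrow> 'c list list \<Rightarrow> 'c)
   \<Rightarrow> nat \<Rightarrow> nat \<Rightarrow> nat set set \<Rightarrow> nat set \<Rightarrow> 'm set \<Rightarrow> bool" where
  "sender_anonymous P R n E T M \<longleftrightarrow>
     (\<forall>m\<in>M. (SUP S. guess_prob P R n E T m S) = 1 / real (n - card T))"

definition disconnects :: "nat \<Rightarrow> nat set set \<Rightarrow> nat set \<Rightarrow> bool" where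
  "disconnects n E T \<longleftrightarrow>
     (\<exists>A B. A \<noteq> {} \<and> B \<noteq> {} \<and> A \<inter> B = {} \<and> A \<union> B = {0..<n} - T \<and>
            (\<forall>a\<in>A. \<forall>b\<in>B. {a, b} \<notin> E))"

end

theory Submission
  imports Defs
begin

lemma prob_bind_sets:
  assumes U: "finite U" "U \<noteq> {}" and K: "finite K" "K \<noteq> {}"
  shows "measure_pmf.prob (pmf_of_set U \<bind> (\<lambda>s. pmf_of_set K \<bind> (\<lambda>\<kappa>. return_pmf (h s \<kappa>)))) X
       = (\<Sum>s\<in>U. real (card {\<kappa>\<in>K. h s \<kappa> \<in> X})) / (real (card U) * real (card K))"
proof -
  have cK: "\<And>s. (\<Sum>\<kappa>\<in>K. indicator X (h s \<kappa>) :: ennreal) = ennreal (real (card {\<kappa>\<in>K. h s \<kappa> \<in> X}))"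
  proof -
    fix s
    have "(\<Sum>\<kappa>\<in>K. indicator X (h s \<kappa>) :: ennreal) = (\<Sum>\<kappa>\<in>K. ennreal (indicator X (h s \<kappa>)))"
      by (intro sum.cong refl) (simp add: indicator_def)
    also have "\<dots> = ennreal (\<Sum>\<kappa>\<in>K. indicator X (h s \<kappa>))"
      by (rule sum_ennreal) simp
    also have "(\<Sum>\<kappa>\<in>K. indicator X (h s \<kappa>) :: real) = real (card {\<kappa>\<in>K. h s \<kappa> \<in> X})"
      using K by (simp add: indicator_def sum.If_cases Int_def)
    finally show "?thesis s" .
  qed
  have "emeasure (measure_pmf (pmf_of_set U \<bind> (\<lambda>s. pmf_of_set K \<bind> (\<lambda>\<kappa>. return_pmf (h s \<kappa>))))) X
      = (\<Sum>s\<in>U. ennreal (real (card {\<kappa>\<in>K. h s \<kappa> \<in> X})) / card K) / card U"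
    using U K by (simp add: nn_integral_pmf_of_set cK)
  also have "\<dots> = ennreal ((\<Sum>s\<in>U. real (card {\<kappa>\<in>K. h s \<kappa> \<in> X})) / (real (card U) * real (card K)))"
  proof -
    have "(\<Sum>s\<in>U. ennreal (real (card {\<kappa>\<in>K. h s \<kappa> \<in> X})) / card K)
        = (\<Sum>s\<in>U. ennreal (real (card {\<kappa>\<in>K. h s \<kappa> \<in> X}) / card K))"
      using K by (intro sum.cong refl) (simp add: ennreal_of_nat_eq_real_of_nat divide_ennreal card_gt_0_iff)
    also have "\<dots> = ennreal (\<Sum>s\<in>U. real (card {\<kappa>\<in>K. h s \<kappa> \<in> X}) / card K)"
      by (rule sum_ennreal) simp
    finally have e: "(\<Sum>s\<in>U. ennreal (real (card {\<kappa>\<in>K. h s \<kappa> \<in> X})) / card K) = ennreal (\<Sum>s\<in>U. real (card {\<kappa>\<in>K. h s \<kappa> \<in> X}) / card K)" .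
    show ?thesis unfolding e using U K
      by (simp add: divide_ennreal ennreal_of_nat_eq_real_of_nat sum_divide_distrib[symmetric] sum_nonneg card_gt_0_iff divide_nonneg_nonneg mult.commute)
  qed
  finally show ?thesis
    by (simp add: measure_pmf.emeasure_eq_measure divide_nonneg_nonneg sum_nonneg)
qed

fun gtr :: "(nat \<Rightarrow> nat \<Rightarrow> 'm option \<Rightarrow> (nat set \<Rightarrow> bool) \<Rightarrow> 'c list list \<Rightarrow> 'c)
   \<Rightarrow> nat \<Rightarrow> nat set set \<Rightarrow> (nat \<Rightarrow> 'm option) \<Rightarrow> (nat set \<Rightarrow> bool) \<Rightarrow> nat \<Rightarrow> 'c list list" where
  "gtr P n E inp \<kappa> 0 = []"
| "gtr P n E inp \<kappa> (Suc k) =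
     (let h = gtr P n E inp \<kappa> k
      in h @ [map (\<lambda>i. P k i (inp i) (key_view E \<kappa> i) h) [0..<n]])"

lemma transcript_gtr:
  "transcript P n E s m \<kappa> R = gtr P n E (\<lambda>i. if i = s then Some m else None) \<kappa> R"
  by (induction R) (simp_all add: Let_def)

definition mixk :: "nat set \<Rightarrow> (nat set \<Rightarrow> bool) \<Rightarrow> (nat set \<Rightarrow> bool) \<Rightarrow> (nat set \<Rightarrow> bool)" where
  "mixk B k1 k2 = (\<lambda>e. if e \<inter> B \<noteq> {} then k2 e else k1 e)"

definition mixi :: "nat set \<Rightarrow> (nat \<Rightarrow> 'm option) \<Rightarrow> (nat \<Rightarrow> 'm option) \<Rightarrow> (nat \<Rightarrow> 'm option)" where
  "mixi B i1 i2 = (\<lambda>i. if i \<in> B then i2 i else i1 i)"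

lemma mixk_inv: "mixk B (mixk B k1 k2) (mixk B k2 k1) = k1"
  by (auto simp: mixk_def)

lemma finite_keys:
  assumes "key_graph n E"
  shows "finite (key_assignments E)" "key_assignments E \<noteq> {}"
proof -
  have fE: "finite E"
  proof (rule finite_subset)
    show "E \<subseteq> Pow {0..<n}" using assms unfolding key_graph_def by fastforce
  qed simp
  have "key_assignments E \<subseteq> (\<lambda>S e. e \<in> S) ` Pow E"
  proof
    fix k assume "k \<in> key_assignments E"
    then have "{e. k e} \<subseteq> E" by (auto simp: key_assignments_def)
    moreover have "k = (\<lambda>e. e \<in> {e. k e})" by simp
    ultimately show "k \<in> (\<lambda>S e. e \<in> S) ` Pow E" by blast
  qed
  then show "finite (key_assignments E)" using fE by (meson finite_subset finite_imageI finite_Pow_iff)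
  show "key_assignments E \<noteq> {}"
    by (auto simp: key_assignments_def intro!: exI[of _ "\<lambda>_. False"])
qed

locale split_setup =
  fixes P :: "nat \<Rightarrow> nat \<Rightarrow> 'm option \<Rightarrow> (nat set \<Rightarrow> bool) \<Rightarrow> 'c list list \<Rightarrow> 'c"
    and R n :: nat and E :: "nat set set" and T A B :: "nat set"
  assumes kg: "key_graph n E"
    and disj: "A \<inter> B = {}" and cover: "A \<union> B = {0..<n} - T"
    and noedge: "\<forall>a\<in>A. \<forall>b\<in>B. {a, b} \<notin> E"
begin

lemma kvB: "i \<in> B \<Longrightarrow> key_view E (mixk B k1 k2) i = key_view E k2 i"
  by (auto simp: key_view_def mixk_def)

lemma kvA:
  assumes "i \<in> A"
  shows "key_view E (mixk B k1 k2) i = key_view E k1 i"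
proof -
  have "e \<inter> B = {}" if "e \<in> E" "i \<in> e" for e
  proof (rule ccontr)
    assume "e \<inter> B \<noteq> {}"
    then obtain b where b: "b \<in> e" "b \<in> B" by blast
    obtain x y where e: "e = {x, y}" using kg \<open>e \<in> E\<close> unfolding key_graph_def by blast
    have "i \<noteq> b" using disj assms b by blast
    then have "e = {i, b}" using e b \<open>i \<in> e\<close> by auto
    then show False using noedge assms b \<open>e \<in> E\<close> by blast
  qed
  then show ?thesis by (auto simp: key_view_def mixk_def)
qed

lemma kvT:
  assumes "i \<in> T" "coalition_view E T k1 = coalition_view E T k2"
  shows "key_view E (mixk B k1 k2) i = key_view E k1 i"
proof -
  have "k1 e = k2 e" if "e \<in> E" "i \<in> e" for e
  proof -
    have "coalition_view E T k1 e = coalition_view E T k2 e" using assms(2) by simp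
    then show ?thesis using that assms(1) by (auto simp: coalition_view_def split: if_splits)
  qed
  then show ?thesis by (auto simp: key_view_def mixk_def)
qed

lemma rect:
  assumes cv: "coalition_view E T k1 = coalition_view E T k2"
    and inT: "\<forall>i\<in>T. inp1 i = inp2 i"
    and eq: "gtr P n E inp1 k1 k = gtr P n E inp2 k2 k"
  shows "gtr P n E (mixi B inp1 inp2) (mixk B k1 k2) k = gtr P n E inp1 k1 k"
  using eq
proof (induction k)
  case 0
  then show ?case by simp
next
  case (Suc k)
  let ?h = "gtr P n E inp1 k1 k"
  have eqs: "?h = gtr P n E inp2 k2 k"
    and row: "map (\<lambda>i. P k i (inp1 i) (key_view E k1 i) ?h) [0..<n]
            = map (\<lambda>i. P k i (inp2 i) (key_view E k2 i) (gtr P n E inp2 k2 k)) [0..<n]"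
    using append1_eq_conv[THEN iffD1, OF Suc.prems[unfolded gtr.simps Let_def]] by blast+
  have IH: "gtr P n E (mixi B inp1 inp2) (mixk B k1 k2) k = ?h" using Suc.IH eqs by simp
  have "map (\<lambda>i. P k i (mixi B inp1 inp2 i) (key_view E (mixk B k1 k2) i) ?h) [0..<n]
      = map (\<lambda>i. P k i (inp1 i) (key_view E k1 i) ?h) [0..<n]"
  proof (rule map_cong[OF refl])
    fix i assume "i \<in> set [0..<n]"
    then have i: "i < n" by simp
    show "P k i (mixi B inp1 inp2 i) (key_view E (mixk B k1 k2) i) ?h = P k i (inp1 i) (key_view E k1 i) ?h"
    proof (cases "i \<in> B")
      case True
      have "P k i (inp1 i) (key_view E k1 i) ?h = P k i (inp2 i) (key_view E k2 i) ?h"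
        using arg_cong[OF row, of "\<lambda>xs. xs ! i"] i eqs by simp
      then show ?thesis using True kvB[OF True] by (simp add: mixi_def)
    next
      case False
      show ?thesis
      proof (cases "i \<in> A")
        case True
        then show ?thesis using False kvA[OF True] by (simp add: mixi_def)
      next
        case nA: False
        then have "i \<in> T" using False i cover by auto
        then show ?thesis using False kvT[OF _ cv] by (simp add: mixi_def)
      qed
    qed
  qed
  then show ?case using IH by (simp add: Let_def)
qed


definition cnt where
  "cnt inp x = card {\<kappa>\<in>key_assignments E. (gtr P n E inp \<kappa> R, coalition_view E T \<kappa>) = x}"

lemma cv_mix: "coalition_view E T k1 = coalition_view E T k2 \<Longrightarrow>
   coalition_view E T (mixk B k1 k2) = coalition_view E T k1"
  by (rule ext) (metis (no_types, lifting) coalition_view_def mixk_def)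

lemma mix_keys: "k1 \<in> key_assignments E \<Longrightarrow> k2 \<in> key_assignments E \<Longrightarrow> mixk B k1 k2 \<in> key_assignments E"
  by (auto simp: key_assignments_def mixk_def)

lemma rect_card:
  assumes inT: "\<forall>i\<in>T. i1 i = i2 i"
  shows "cnt i1 x * cnt i2 x \<le> cnt (mixi B i1 i2) x * cnt (mixi B i2 i1) x"
proof -
  let ?N = "\<lambda>inp. {\<kappa>\<in>key_assignments E. (gtr P n E inp \<kappa> R, coalition_view E T \<kappa>) = x}"
  let ?g = "\<lambda>(k1, k2). (mixk B k1 k2, mixk B k2 k1)"
  have fin: "finite (key_assignments E)" using finite_keys[OF kg] by simp
  have "card (?N i1 \<times> ?N i2) \<le> card (?N (mixi B i1 i2) \<times> ?N (mixi B i2 i1))"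
  proof (rule card_inj_on_le)
    show "inj_on ?g (?N i1 \<times> ?N i2)"
    proof (rule inj_onI)
      fix p q assume "p \<in> ?N i1 \<times> ?N i2" "q \<in> ?N i1 \<times> ?N i2" and h: "?g p = ?g q"
      obtain a b where p: "p = (a, b)" by (cases p)
      obtain c d where q: "q = (c, d)" by (cases q)
      have h1: "mixk B a b = mixk B c d" and h2: "mixk B b a = mixk B d c" using h p q by simp_all
      have "a = c" using mixk_inv[of B a b] mixk_inv[of B c d] h1 h2 by simp
      moreover have "b = d" using mixk_inv[of B b a] mixk_inv[of B d c] h1 h2 by simp
      ultimately show "p = q" using p q by simp
    qed
    show "?g ` (?N i1 \<times> ?N i2) \<subseteq> ?N (mixi B i1 i2) \<times> ?N (mixi B i2 i1)"
    proof
      fix y assume "y \<in> ?g ` (?N i1 \<times> ?N i2)"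
      then obtain k1 k2 where y: "y = ?g (k1, k2)" and k1: "k1 \<in> key_assignments E" "(gtr P n E i1 k1 R, coalition_view E T k1) = x"
        and k2: "k2 \<in> key_assignments E" "(gtr P n E i2 k2 R, coalition_view E T k2) = x" by auto
      have cv: "coalition_view E T k1 = coalition_view E T k2" and g: "gtr P n E i1 k1 R = gtr P n E i2 k2 R"
        using k1 k2 by auto
      have r1: "gtr P n E (mixi B i1 i2) (mixk B k1 k2) R = gtr P n E i1 k1 R"
        by (rule rect[OF cv inT g])
      have r2: "gtr P n E (mixi B i2 i1) (mixk B k2 k1) R = gtr P n E i2 k2 R"
        by (rule rect) (use cv inT g in auto)
      show "y \<in> ?N (mixi B i1 i2) \<times> ?N (mixi B i2 i1)"
        using y r1 r2 k1 k2 cv_mix[OF cv] cv_mix[OF cv[symmetric]] mix_keys by auto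
    qed
    show "finite (?N (mixi B i1 i2) \<times> ?N (mixi B i2 i1))" using fin by simp
  qed
  then show ?thesis by (simp add: cnt_def card_cartesian_product)
qed

end

lemma sum_fibres:
  assumes "finite K" "finite F" "f ` K \<subseteq> F"
  shows "(\<Sum>x\<in>F. card {k\<in>K. f k = x}) = card K"
proof -
  have "K = (\<Union>x\<in>F. {k\<in>K. f k = x})" using assms(3) by auto
  then have "card K = card (\<Union>x\<in>F. {k\<in>K. f k = x})" by simp
  also have "\<dots> = (\<Sum>x\<in>F. card {k\<in>K. f k = x})"
    by (rule card_UN_disjoint) (use assms in auto)
  finally show ?thesis by simp
qed

lemma amgm_nat:
  fixes p q r :: "'a \<Rightarrow> nat"
  assumes "finite F" and le: "\<forall>x\<in>F. p x * p x \<le> q x * r x"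
    and s1: "sum p F = sum r F" and s2: "sum q F = sum r F"
  shows "\<forall>x\<in>F. p x = r x"
proof -
  have pt: "2 * p x \<le> q x + r x" if "x \<in> F" for x
  proof -
    have "real (p x) * real (p x) \<le> real (q x) * real (r x)" using le that
      by (metis of_nat_le_iff of_nat_mult)
    moreover have "(real (q x) + real (r x))^2 = (real (q x) - real (r x))^2 + 4 * (real (q x) * real (r x))"
      by (simp add: power2_eq_square algebra_simps)
    moreover have "(2 * real (p x))^2 = 4 * (real (p x) * real (p x))"
      by (simp add: power2_eq_square algebra_simps)
    moreover have "0 \<le> (real (q x) - real (r x))^2" by simp
    ultimately have "(2 * real (p x))^2 \<le> (real (q x) + real (r x))^2"
      by linarith
    then have "2 * real (p x) \<le> real (q x) + real (r x)"
      by (rule power2_le_imp_le) simp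
    then show ?thesis by linarith
  qed
  have eq: "2 * p x = q x + r x" if "x \<in> F" for x
  proof (rule ccontr)
    assume "2 * p x \<noteq> q x + r x"
    then have "2 * p x < q x + r x" using pt that by force
    then have "(\<Sum>x\<in>F. 2 * p x) < (\<Sum>x\<in>F. q x + r x)"
      using pt assms(1) that by (intro sum_strict_mono_ex1) auto
    then show False using s1 s2 by (simp add: sum.distrib sum_distrib_left[symmetric])
  qed
  show ?thesis
  proof
    fix x assume x: "x \<in> F"
    have e: "2 * real (p x) = real (q x) + real (r x)" using eq[OF x] by linarith
    have "real (p x) * real (p x) \<le> real (q x) * real (r x)" using le x
      by (metis of_nat_le_iff of_nat_mult)
    moreover have "(real (q x) + real (r x))^2 = (real (q x) - real (r x))^2 + 4 * (real (q x) * real (r x))"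
      by (simp add: power2_eq_square algebra_simps)
    moreover have "(2 * real (p x))^2 = 4 * (real (p x) * real (p x))"
      by (simp add: power2_eq_square algebra_simps)
    moreover have "(2 * real (p x))^2 = (real (q x) + real (r x))^2" using e by simp
    ultimately have "(real (q x) - real (r x))^2 \<le> 0"
      by linarith
    then have "real (q x) = real (r x)" by simp
    then show "p x = r x" using e by simp
  qed
qed


lemma guess_le:
  assumes kg: "key_graph n E" and Tsub: "T \<subseteq> {0..<n}"
    and u: "u \<in> {0..<n} - T" and v: "v \<in> {0..<n} - T" and uv: "u \<noteq> v"
    and bound: "\<forall>S. guess_prob P R n E T m S \<le> 1 / real (n - card T)"
  shows "card {\<kappa>\<in>key_assignments E. (transcript P n E u m \<kappa> R, coalition_view E T \<kappa>) = x}
       \<le> card {\<kappa>\<in>key_assignments E. (transcript P n E v m \<kappa> R, coalition_view E T \<kappa>) = x}"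
proof (rule ccontr)
  define K where "K = key_assignments E"
  define U where "U = {0..<n} - T"
  have fK: "finite K" "K \<noteq> {}" using finite_keys[OF kg] by (simp_all add: K_def)
  have fU: "finite U" "U \<noteq> {}" using u by (auto simp: U_def)
  have cU: "card U = n - card T" unfolding U_def using Tsub
    by (simp add: card_Diff_subset finite_subset)
  define cu where "cu = card {\<kappa>\<in>K. (transcript P n E u m \<kappa> R, coalition_view E T \<kappa>) = x}"
  define cv where "cv = card {\<kappa>\<in>K. (transcript P n E v m \<kappa> R, coalition_view E T \<kappa>) = x}"
  assume "\<not> ?thesis"
  then have lt: "cv < cu" by (simp add: cu_def cv_def K_def)
  define S where "S = (\<lambda>C g. if (C, g) = x then u else v)"
  let ?c = "\<lambda>s. real (card {\<kappa>\<in>K. (s, transcript P n E s m \<kappa> R, coalition_view E T \<kappa>) \<in> {(s, C, g). S C g = s}})"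
  have gp: "guess_prob P R n E T m S = (\<Sum>s\<in>U. ?c s) / (real (card U) * real (card K))"
    unfolding guess_prob_def adv_experiment_def K_def[symmetric] U_def[symmetric]
    by (rule prob_bind_sets[OF fU fK])
  have cu': "?c u = real cu"
  proof -
    have "{\<kappa>\<in>K. (u, transcript P n E u m \<kappa> R, coalition_view E T \<kappa>) \<in> {(s, C, g). S C g = s}}
        = {\<kappa>\<in>K. (transcript P n E u m \<kappa> R, coalition_view E T \<kappa>) = x}"
      using uv by (auto simp: S_def)
    then show ?thesis by (simp add: cu_def)
  qed
  have cv': "?c v = real (card K) - real cv"
  proof -
    have "{\<kappa>\<in>K. (v, transcript P n E v m \<kappa> R, coalition_view E T \<kappa>) \<in> {(s, C, g). S C g = s}}
        = K - {\<kappa>\<in>K. (transcript P n E v m \<kappa> R, coalition_view E T \<kappa>) = x}"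
      using uv by (auto simp: S_def)
    then have "card {\<kappa>\<in>K. (v, transcript P n E v m \<kappa> R, coalition_view E T \<kappa>) \<in> {(s, C, g). S C g = s}}
        = card K - cv"
      using fK by (simp add: cv_def card_Diff_subset)
    moreover have "cv \<le> card K" unfolding cv_def using fK by (intro card_mono) auto
    ultimately show ?thesis by simp
  qed
  have "?c u + ?c v = (\<Sum>s\<in>{u, v}. ?c s)" using uv by simp
  also have "\<dots> \<le> (\<Sum>s\<in>U. ?c s)"
    by (rule sum_mono2) (use fU u v in \<open>auto simp: U_def\<close>)
  finally have "real (card K) < (\<Sum>s\<in>U. ?c s)" using cu' cv' lt by simp
  then have "real (card K) / (real (card U) * real (card K)) < (\<Sum>s\<in>U. ?c s) / (real (card U) * real (card K))"
    using fK fU by (intro divide_strict_right_mono) (auto simp: card_gt_0_iff)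
  then have "1 / real (card U) < guess_prob P R n E T m S"
    using gp fK by (simp add: card_gt_0_iff)
  then show False using bound cU by (metis not_le)
qed

theorem mainTheorem2:
  fixes P :: "nat \<Rightarrow> nat \<Rightarrow> 'm option \<Rightarrow> (nat set \<Rightarrow> bool) \<Rightarrow> 'c list list \<Rightarrow> 'c"
    and R n :: nat and E :: "nat set set" and T :: "nat set" and M :: "'m set"
  assumes "key_graph n E"
    and "T \<subseteq> {0..<n}"
    and "\<exists>m1\<in>M. \<exists>m2\<in>M. m1 \<noteq> m2"
    and "transmits P R n E M"
    and "disconnects n E T"
  shows "\<not> sender_anonymous P R n E T M"
proof
  assume anon: "sender_anonymous P R n E T M"
  note kg = assms(1) and Tsub = assms(2)
  obtain m1 m2 where m: "m1 \<in> M" "m2 \<in> M" "m1 \<noteq> m2" using assms(3) by blast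
  obtain dec where dec: "\<And>s m \<kappa>. s < n \<Longrightarrow> m \<in> M \<Longrightarrow> \<kappa> \<in> key_assignments E \<Longrightarrow> dec (transcript P n E s m \<kappa> R) = m"
    using assms(4) unfolding transmits_def by blast
  obtain A B where AB: "A \<noteq> {}" "B \<noteq> {}" "A \<inter> B = {}" "A \<union> B = {0..<n} - T"
      "\<forall>a\<in>A. \<forall>b\<in>B. {a, b} \<notin> E"
    using assms(5) unfolding disconnects_def by blast
  interpret split_setup P R n E T A B
    using AB kg by unfold_locales auto
  obtain a where a: "a \<in> A" using AB by blast
  obtain b where b: "b \<in> B" using AB by blast
  have aU: "a \<in> {0..<n} - T" and bU: "b \<in> {0..<n} - T" and ab: "a \<noteq> b" and aB: "a \<notin> B"
    using a b AB by blast+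
  define K where "K = key_assignments E"
  have fK: "finite K" "K \<noteq> {}" using finite_keys[OF kg] by (simp_all add: K_def)
  define ia where "ia = (\<lambda>m i. if i = a then Some m else (None :: 'm option))"
  define ib where "ib = (\<lambda>m i. if i = b then Some m else (None :: 'm option))"
  define iab where "iab = (\<lambda>m i. if i = a \<or> i = b then Some m else (None :: 'm option))"
  define i0 where "i0 = (\<lambda>i::nat. None :: 'm option)"
  define f where "f = (\<lambda>inp \<kappa>. (gtr P n E inp \<kappa> R, coalition_view E T \<kappa>))"
  have cnt_eq: "cnt inp x = card {\<kappa>\<in>K. f inp \<kappa> = x}" for inp x
    by (simp add: cnt_def K_def f_def)
  define F where "F = (\<lambda>m. f (ia m) ` K \<union> f (iab m) ` K \<union> f i0 ` K)"
  have key: "\<forall>x\<in>F m. cnt (ia m) x = cnt i0 x" if mM: "m \<in> M" for m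
  proof -
    have bound: "\<forall>S. guess_prob P R n E T m S \<le> 1 / real (n - card T)"
    proof
      fix S
      have "guess_prob P R n E T m S \<le> (SUP S. guess_prob P R n E T m S)"
        by (rule cSUP_upper) (auto simp: guess_prob_def bdd_above_def intro!: exI[of _ 1])
      then show "guess_prob P R n E T m S \<le> 1 / real (n - card T)"
        using anon mM unfolding sender_anonymous_def by simp
    qed
    have eqab: "cnt (ia m) x = cnt (ib m) x" for x
      using guess_le[OF kg Tsub aU bU ab bound, of x] guess_le[OF kg Tsub bU aU ab[symmetric] bound, of x]
      by (simp add: cnt_def transcript_gtr ia_def ib_def)
    have m1: "mixi B (ia m) (ib m) = iab m" using b aB by (auto simp: mixi_def ia_def ib_def iab_def)
    have m2: "mixi B (ib m) (ia m) = i0" using b aB by (auto simp: mixi_def ia_def ib_def i0_def)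
    have inT: "\<forall>i\<in>T. ia m i = ib m i" using aU bU by (auto simp: ia_def ib_def)
    have le: "\<forall>x\<in>F m. cnt (ia m) x * cnt (ia m) x \<le> cnt (iab m) x * cnt i0 x"
      using rect_card[OF inT] eqab m1 m2 by metis
    have fF: "finite (F m)" using fK by (simp add: F_def)
    have s: "(\<Sum>x\<in>F m. cnt inp x) = card K" if "f inp ` K \<subseteq> F m" for inp
      unfolding cnt_eq by (rule sum_fibres[OF fK(1) fF that])
    have s1: "(\<Sum>x\<in>F m. cnt (ia m) x) = card K" by (rule s) (auto simp: F_def)
    have s2: "(\<Sum>x\<in>F m. cnt (iab m) x) = card K" by (rule s) (auto simp: F_def)
    have s3: "(\<Sum>x\<in>F m. cnt i0 x) = card K" by (rule s) (auto simp: F_def)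
    show ?thesis
      by (rule amgm_nat[OF fF le]) (simp_all only: s1 s2 s3)
  qed
  define \<kappa>0 where "\<kappa>0 = (\<lambda>e::nat set. False)"
  have k0: "\<kappa>0 \<in> K" by (simp add: K_def key_assignments_def \<kappa>0_def)
  define x0 where "x0 = f (ia m1) \<kappa>0"
  have "x0 \<in> F m1" using k0 by (simp add: F_def x0_def)
  then have e1: "cnt (ia m1) x0 = cnt i0 x0" using key[OF m(1)] by blast
  have "cnt (ia m1) x0 > 0" unfolding cnt_eq using fK k0 x0_def
    by (subst card_gt_0_iff) auto
  then have "cnt i0 x0 > 0" using e1 by simp
  then obtain \<kappa>1 where k1: "\<kappa>1 \<in> K" "f i0 \<kappa>1 = x0" unfolding cnt_eq
    by (metis (mono_tags, lifting) card_gt_0_iff empty_Collect_eq)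
  then have "x0 \<in> F m2" by (auto simp: F_def)
  then have "cnt (ia m2) x0 > 0" using key[OF m(2)] \<open>cnt i0 x0 > 0\<close> by simp
  then obtain \<kappa>2 where k2: "\<kappa>2 \<in> K" "f (ia m2) \<kappa>2 = x0" unfolding cnt_eq
    by (metis (mono_tags, lifting) card_gt_0_iff empty_Collect_eq)
  have an: "a < n" using aU by simp
  have "transcript P n E a m2 \<kappa>2 R = transcript P n E a m1 \<kappa>0 R"
    using k2 by (simp add: transcript_gtr f_def x0_def ia_def)
  then have "m2 = m1" using dec[OF an m(2) k2(1)[unfolded K_def]] dec[OF an m(1) k0[unfolded K_def]] by simp
  then show False using m by simp
qed

end
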